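(* Fix a master $m$, a finite nonempty set $\Omega_m$ of workers, and for each $n\in\Omega_m$ parameters $u_{m,n}>0$, $a_{m,n}>0$, and let $L_m>0$. Then the optimization problem $$\min_{\{l_{m,n}\}_{n\in\Omega_m},\,t_m} \; t_m \quad\text{s.t.}\quad L_m-\sum_{n\in\Omega_m} l_{m,n}\left(1-e^{-\frac{u_{m,n}}{l_{m,n}}\left(t_m-a_{m,n}l_{m,n}\right)}\right)\le 0,\qquad l_{m,n}\ge 0\ \ \forall n\in\Omega_m,$$ is a convex optimization problem. (Here the constraint function is considered on the domain $l_{m,n}>0$.)
   Context: This is the load-allocation problem for a single master $m$ in a coded distributed computing system: master $m$ must obtain $L_m$ MDS-coded row-vector products, worker $n\in\Omega_m$ is allocated $l_{m,n}$ coded rows, and the processing time of worker $n$ on $l$ rows is a shifted exponential random variable $T$ with $\mathbb{P}[T\le t]=1-e^{-\frac{u_{m,n}}{l}(t-a_{m,n}l)}$ for $t\ge a_{m,n}l$ (and $0$ otherwise). The sum in the constraint is the expected number of results received by time $t_m$ (in the regime $t_m\ge a_{m,n}l_{m,n}$), and $t_m$ is the approximate completion time. *)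

theory Defs
  imports "HOL-Analysis.Analysis"
begin

text \<open>Workers of master m are the elements of a finite type 'w (so Omega_m = UNIV).
  A decision vector is a pair (l, t) with l :: real^'w the loads and t the completion time.\<close>

definition expected_results ::
  "('w::finite \<Rightarrow> real) \<Rightarrow> ('w \<Rightarrow> real) \<Rightarrow> real^'w \<Rightarrow> real \<Rightarrow> real" where
  "expected_results u a l t =
     (\<Sum>n\<in>UNIV. l$n * (1 - exp (- (u n / l$n) * (t - a n * l$n))))"

definition load_constraint ::
  "real \<Rightarrow> ('w::finite \<Rightarrow> real) \<Rightarrow> ('w \<Rightarrow> real) \<Rightarrow> (real^'w) \<times> real \<Rightarrow> real" where
  "load_constraint L u a x = L - expected_results u a (fst x) (snd x)"

definition problem_domain :: "((real^'w::finite) \<times> real) set" where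
  "problem_domain = {x. \<forall>n. fst x $ n > 0}"

end

theory Submission imports Defs begin

lemma expconv:
  fixes p q al be :: real
  assumes "al \<ge> 0" "be \<ge> 0" "al + be = 1"
  shows "exp (al * p + be * q) \<le> al * exp p + be * exp q"
proof -
  have "exp ((1 - be) *\<^sub>R p + be *\<^sub>R q) \<le> (1 - be) * exp p + be * exp q"
    using convex_onD[OF exp_convex, of be p q] assms by simp
  moreover have "al = 1 - be" using assms by simp
  ultimately show ?thesis by simp
qed

lemma term_concave:
  fixes c b la lb ta tb th :: real
  assumes la: "la > 0" and lb: "lb > 0" and th: "0 \<le> th" "th \<le> 1"
  defines "g \<equiv> \<lambda>l t. l * (1 - exp (- (c / l) * (t - b * l)))"
  shows "(1 - th) * g la ta + th * g lb tb \<le> g ((1 - th) * la + th * lb) ((1 - th) * ta + th * tb)"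
proof -
  define l where "l = (1 - th) * la + th * lb"
  define t where "t = (1 - th) * ta + th * tb"
  have lpos: "l > 0" unfolding l_def using la lb th
    by (smt (verit) mult_nonneg_nonneg mult_pos_pos)
  have geq: "g x y = x - exp (c * b) * (x * exp (- c * (y / x)))" if "x > 0" for x y
  proof -
    have "- (c / x) * (y - b * x) = c * b + (- c * (y / x))" using that by (simp add: field_simps)
    then have "exp (- (c / x) * (y - b * x)) = exp (c * b) * exp (- c * (y / x))"
      by (simp only: exp_add)
    then show ?thesis unfolding g_def by (simp add: algebra_simps)
  qed
  define al where "al = (1 - th) * la / l"
  define be where "be = th * lb / l"
  have al0: "al \<ge> 0" unfolding al_def using th la lpos by simp
  have be0: "be \<ge> 0" unfolding be_def using th lb lpos by simp
  have ab1: "al + be = 1" unfolding al_def be_def l_def using lpos l_def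
    by (simp add: add_divide_distrib[symmetric])
  have lin: "- c * (t / l) = al * (- c * (ta / la)) + be * (- c * (tb / lb))"
    unfolding al_def be_def t_def using la lb lpos by (simp add: field_simps)
  have "exp (- c * (t / l)) \<le> al * exp (- c * (ta / la)) + be * exp (- c * (tb / lb))"
    unfolding lin by (rule expconv[OF al0 be0 ab1])
  then have "l * exp (- c * (t / l)) \<le> l * (al * exp (- c * (ta / la)) + be * exp (- c * (tb / lb)))"
    using lpos by simp
  also have "\<dots> = (1 - th) * (la * exp (- c * (ta / la))) + th * (lb * exp (- c * (tb / lb)))"
    unfolding al_def be_def using lpos by (simp add: field_simps)
  finally have key: "l * exp (- c * (t / l)) \<le> (1 - th) * (la * exp (- c * (ta / la))) + th * (lb * exp (- c * (tb / lb)))" .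
  have "(1 - th) * g la ta + th * g lb tb = l - exp (c * b) * ((1 - th) * (la * exp (- c * (ta / la))) + th * (lb * exp (- c * (tb / lb))))"
    unfolding geq[OF la] geq[OF lb] l_def by (simp add: algebra_simps)
  also have "\<dots> \<le> l - exp (c * b) * (l * exp (- c * (t / l)))"
    using key by (simp add: mult_left_mono)
  also have "\<dots> = g l t" using geq[OF lpos] by simp
  finally show ?thesis unfolding l_def t_def .
qed


lemma dom_convex: "convex (problem_domain :: ((real^'w::finite) \<times> real) set)"
  unfolding convex_def problem_domain_def
proof (clarsimp)
  fix a b :: "real^'w" and s t :: real and u v :: real and n
  assume "\<forall>n. 0 < a $ n" "\<forall>n. 0 < b $ n" "0 \<le> u" "0 \<le> v" "u + v = 1"
  then show "0 < u * a $ n + v * b $ n"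
    by (smt (verit) mult_nonneg_nonneg mult_pos_pos)
qed

theorem lemma1:
  fixes u a :: "'w::finite \<Rightarrow> real" and L :: real
  assumes "\<And>n. u n > 0" and "\<And>n. a n > 0" and "L > 0"
  shows "convex (problem_domain :: ((real^'w) \<times> real) set)
    \<and> convex_on problem_domain (\<lambda>x::(real^'w) \<times> real. snd x)
    \<and> convex_on problem_domain (load_constraint L u a)
    \<and> (\<forall>n. convex_on problem_domain (\<lambda>x::(real^'w) \<times> real. - (fst x $ n)))"
proof (intro conjI allI)
  show "convex (problem_domain :: ((real^'w) \<times> real) set)" by (rule dom_convex)
  show "convex_on problem_domain (\<lambda>x::(real^'w) \<times> real. snd x)"
    by (rule convex_onI[OF _ dom_convex]) (simp add: algebra_simps)
  fix n
  show "convex_on problem_domain (\<lambda>x::(real^'w) \<times> real. - (fst x $ n))"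
    by (rule convex_onI[OF _ dom_convex]) (simp add: algebra_simps)
next
  show "convex_on problem_domain (load_constraint L u a)"
  proof (rule convex_onI[OF _ dom_convex])
    fix th :: real and x y :: "(real^'w) \<times> real"
    assume th: "0 < th" "th < 1" and xD: "x \<in> problem_domain" and yD: "y \<in> problem_domain"
    define g where "g = (\<lambda>n l t. l * (1 - exp (- (u n / l) * (t - a n * l))))"
    have pt: "(1 - th) * g n (fst x $ n) (snd x) + th * g n (fst y $ n) (snd y)
        \<le> g n (fst ((1 - th) *\<^sub>R x + th *\<^sub>R y) $ n) (snd ((1 - th) *\<^sub>R x + th *\<^sub>R y))" for n
      using term_concave[where la="fst x $ n" and lb="fst y $ n" and th=th and c="u n" and b="a n" and ta="snd x" and tb="snd y"] xD yD th
      unfolding g_def problem_domain_def by simp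
    have er: "expected_results u a (fst z) (snd z) = (\<Sum>n\<in>UNIV. g n (fst z $ n) (snd z))" for z
      unfolding expected_results_def g_def by simp
    have "(1 - th) * expected_results u a (fst x) (snd x) + th * expected_results u a (fst y) (snd y)
        = (\<Sum>n\<in>UNIV. (1 - th) * g n (fst x $ n) (snd x) + th * g n (fst y $ n) (snd y))"
      unfolding er by (simp add: sum.distrib sum_distrib_left)
    also have "\<dots> \<le> expected_results u a (fst ((1 - th) *\<^sub>R x + th *\<^sub>R y)) (snd ((1 - th) *\<^sub>R x + th *\<^sub>R y))"
      unfolding er by (rule sum_mono) (rule pt)
    finally show "load_constraint L u a ((1 - th) *\<^sub>R x + th *\<^sub>R y)
        \<le> (1 - th) * load_constraint L u a x + th * load_constraint L u a y"
      unfolding load_constraint_def by (simp add: algebra_simps)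
  qed
qed

end
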